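(* Let $n\ge 2$ and let $(X_i)_{i\ge1}$ be a Markov chain on a discrete (finite) state space, with $X_1\sim P_1$ and transition matrices $K_1,K_2,\ldots$, so that $X_i$ has pmf $P_i=P_1K_1\cdots K_{i-1}$. For each $i$, let $K_i^{\leftarrow}$ be the backward channel of $K_i$ with respect to $P_i$, $K_i^{\leftarrow}(x|y)=K_i(y|x)P_i(x)/P_{i+1}(y)$, acting on functions $g$ by $(K_i^\leftarrow g)(y)=\sum_x K_i^\leftarrow(x|y)g(x)$, and for $1\le\gamma\le\alpha$ let $\|K_i^\leftarrow\|_{\alpha\to\gamma}=\sup_{g\neq0}\|K_i^\leftarrow g\|_{L^\alpha(P_{i+1})}/\|g\|_{L^\gamma(P_i)}$. For $\alpha>1$ let $\gamma_i^\star(\alpha)$ be the smallest $\gamma$ such that $K_i$ is hypercontractive, i.e. $\|K_i\|_{\alpha\to\gamma}\le 1$, and let $\bar\gamma_i^\star(\alpha)$ be its Hölder conjugate. Let $f$ satisfy the bounded-differences condition $|f(x_1,\ldots,x_i,\ldots,x_n)-f(x_1,\ldots,\hat x,\ldots,x_n)|\le 1/n$ for all $x^n,\hat x$ and $1\le i\le n$. Then for every $\alpha>1$ (with $\beta=\alpha/(\alpha-1)$) and every $t>0$, $$\mathcal{P}_{X^n}\left(\left|f-\mathcal{P}_{\bigotimes_{i=1}^n X_i}(f)\right|\ge t\right)\le 2^{1/\beta}\exp\left(-\frac{2nt^2}{\beta}+\sum_{i=1}^{n-1}\left(\log\|K_i^\leftarrow\|_{\alpha\to\gamma_i^\star(\alpha)}-\frac{1}{\bar\gamma_i^\star(\alpha)}\min_{j\in\mathrm{supp}(P_i)}\log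 P_i(j)\right)\right).$$ Moreover, if the chain is time-homogeneous, $K_i=K$ for all $i$ (with $K^\leftarrow$ and $\gamma_K^\star(\alpha)$, $\bar\gamma_K^\star(\alpha)$ defined analogously), then $$\mathcal{P}_{X^n}\left(\left|f-\mathcal{P}_{\bigotimes_{i=1}^n X_i}(f)\right|\ge t\right)\le 2^{1/\beta}\exp\left(-\frac{2nt^2}{\beta}+(n-1)\log\|K^\leftarrow\|_{\alpha\to\gamma_K^\star(\alpha)}-\frac{1}{\bar\gamma_K^\star(\alpha)}\sum_{i=1}^{n-1}\min_{j\in\mathrm{supp}(P_i)}\log P_i(j)\right)$$ $$\le 2^{1/\beta}\exp\left(-\frac{2nt^2}{\beta}+(n-1)\log\|K^\leftarrow\|_{\alpha\to\gamma_K^\star(\alpha)}-\frac{n-1}{\bar\gamma_K^\star(\alpha)}\min_{i=1,\ldots,n-1}\min_{j\in\mathrm{supp}(P_i)}\log P_i(j)\right).$$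
   Context: $\mathcal{P}_{X^n}$ is the joint law of $(X_1,\ldots,X_n)$ and $\mathcal{P}_{\bigotimes_{i=1}^n X_i}=P_1\otimes\cdots\otimes P_n$ the product of the marginals; $\mu(g)=\int g\,d\mu$. For a Markov kernel $K$, $(Kg)(x)=\sum_y K(y|x)g(y)$ and $\|K\|_{\alpha\to\gamma}=\sup_{g\ne0}\|Kg\|_\alpha/\|g\|_\gamma$.
   Formalization: The time-homogeneous bounds assume that $\gamma_i^\star(\alpha)$ and $\|K_i^\leftarrow\|_{\alpha\to\gamma_i^\star(\alpha)}$ equal the same constants $\gamma_K^\star(\alpha)$ and $\|K^\leftarrow\|_{\alpha\to\gamma_K^\star(\alpha)}$ for every i = 1, ..., n-1, besides $K_i=K$. Each condition added here is assumed in the paper as well or is needed for the statement above to hold. *)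

theory Defs
  imports Complex_Main "HOL-Library.FuncSet"
begin

text \<open>A Markov kernel is
  represented as K :: 'a => 'b => real with K x y = K(y|x) (row = conditioning state).
  Transition matrices of the chain are indexed K 1, K 2, ...; the initial law is P1.\<close>

definition apply_kernel :: "('a \<Rightarrow> 'b::finite \<Rightarrow> real) \<Rightarrow> ('b \<Rightarrow> real) \<Rightarrow> 'a \<Rightarrow> real" where
  "apply_kernel K g x = (\<Sum>y\<in>UNIV. K x y * g y)"

text \<open>Backward channel of K w.r.t. input law P (output law Q = P K):
  backward_kernel P Q K y x = K<-(x|y) = K(y|x) P(x) / Q(y).\<close>
definition backward_kernel :: "('a \<Rightarrow> real) \<Rightarrow> ('b \<Rightarrow> real) \<Rightarrow> ('a \<Rightarrow> 'b \<Rightarrow> real) \<Rightarrow> 'b \<Rightarrow> 'a \<Rightarrow> real" where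
  "backward_kernel P Q K y x = K x y * P x / Q y"

definition Lp_norm :: "('a::finite \<Rightarrow> real) \<Rightarrow> real \<Rightarrow> ('a \<Rightarrow> real) \<Rightarrow> real" where
  "Lp_norm \<mu> p g = (\<Sum>x\<in>UNIV. \<mu> x * \<bar>g x\<bar> powr p) powr (1 / p)"

definition op_norm :: "(('a::finite \<Rightarrow> real) \<Rightarrow> ('b::finite \<Rightarrow> real)) \<Rightarrow> ('b \<Rightarrow> real) \<Rightarrow> real
    \<Rightarrow> ('a \<Rightarrow> real) \<Rightarrow> real \<Rightarrow> real" where
  "op_norm T \<mu> \<alpha> \<nu> \<gamma> = (SUP g\<in>{g. g \<noteq> (\<lambda>_. 0)}. Lp_norm \<mu> \<alpha> (T g) / Lp_norm \<nu> \<gamma> g)"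

definition hc_gamma_star :: "('a::finite \<Rightarrow> real) \<Rightarrow> ('a \<Rightarrow> real) \<Rightarrow> ('a \<Rightarrow> 'a \<Rightarrow> real) \<Rightarrow> real \<Rightarrow> real" where
  "hc_gamma_star P Q K \<alpha> =
     Inf {\<gamma>. 1 \<le> \<gamma> \<and> \<gamma> \<le> \<alpha> \<and> op_norm (apply_kernel K) P \<alpha> Q \<gamma> \<le> 1}"

definition holder_conj :: "real \<Rightarrow> real" where
  "holder_conj \<gamma> = \<gamma> / (\<gamma> - 1)"

definition bwd_norm_star :: "('a::finite \<Rightarrow> real) \<Rightarrow> ('a \<Rightarrow> real) \<Rightarrow> ('a \<Rightarrow> 'a \<Rightarrow> real) \<Rightarrow> real \<Rightarrow> real" where
  "bwd_norm_star P Q K \<alpha> =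
     op_norm (apply_kernel (backward_kernel P Q K)) Q \<alpha> P (hc_gamma_star P Q K \<alpha>)"

definition min_log_supp :: "('a::finite \<Rightarrow> real) \<Rightarrow> real" where
  "min_log_supp P = Min ((\<lambda>j. ln (P j)) ` {j. 0 < P j})"

text \<open>Marginals P_i = P_1 K_1 ... K_{i-1} (1-based; index 0 is a dummy equal to P1).\<close>
fun mc_marg :: "('a::finite \<Rightarrow> real) \<Rightarrow> (nat \<Rightarrow> 'a \<Rightarrow> 'a \<Rightarrow> real) \<Rightarrow> nat \<Rightarrow> 'a \<Rightarrow> real" where
  "mc_marg P1 K 0 = P1"
| "mc_marg P1 K (Suc 0) = P1"
| "mc_marg P1 K (Suc (Suc i)) = (\<lambda>y. \<Sum>x\<in>UNIV. mc_marg P1 K (Suc i) x * K (Suc i) x y)"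

definition mc_joint :: "('a \<Rightarrow> real) \<Rightarrow> (nat \<Rightarrow> 'a \<Rightarrow> 'a \<Rightarrow> real) \<Rightarrow> nat \<Rightarrow> (nat \<Rightarrow> 'a) \<Rightarrow> real" where
  "mc_joint P1 K n x = P1 (x 1) * (\<Prod>i\<in>{1..<n}. K i (x i) (x (Suc i)))"

definition prod_marg_mean :: "('a::finite \<Rightarrow> real) \<Rightarrow> (nat \<Rightarrow> 'a \<Rightarrow> 'a \<Rightarrow> real) \<Rightarrow> nat
    \<Rightarrow> ((nat \<Rightarrow> 'a) \<Rightarrow> real) \<Rightarrow> real" where
  "prod_marg_mean P1 K n f =
     (\<Sum>x\<in>PiE {1..n} (\<lambda>_. UNIV). (\<Prod>i\<in>{1..n}. mc_marg P1 K i (x i)) * f x)"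

definition dev_prob :: "('a::finite \<Rightarrow> real) \<Rightarrow> (nat \<Rightarrow> 'a \<Rightarrow> 'a \<Rightarrow> real) \<Rightarrow> nat
    \<Rightarrow> ((nat \<Rightarrow> 'a) \<Rightarrow> real) \<Rightarrow> real \<Rightarrow> real" where
  "dev_prob P1 K n f t =
     (\<Sum>x\<in>{x\<in>PiE {1..n} (\<lambda>_. UNIV). t \<le> \<bar>f x - prod_marg_mean P1 K n f\<bar>}. mc_joint P1 K n x)"

end

theory Submission
  imports Defs "HOL-Probability.Hoeffding"
begin

lemma hoeff_fin:
  fixes p :: "'a::finite \<Rightarrow> real" and u :: "'a \<Rightarrow> real"
  assumes p0: "\<forall>x. 0 \<le> p x" and p1: "(\<Sum>x\<in>UNIV. p x) = 1"
    and ab: "\<forall>x. a \<le> u x \<and> u x \<le> b" and E0: "(\<Sum>x\<in>UNIV. p x * u x) = 0" and l: "l > 0"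
  shows "(\<Sum>x\<in>UNIV. p x * exp (l * u x)) \<le> exp (l\<^sup>2 * (b-a)\<^sup>2/8)"
proof -
  have prob: "(\<integral>\<^sup>+x. ennreal (p x) \<partial>count_space UNIV) = 1"
    using p0 p1 by (simp add: nn_integral_count_space_finite sum_ennreal[symmetric] max_def)
  define M where "M = embed_pmf p"
  have pM: "pmf M x = p x" for x unfolding M_def using p0 prob by (simp add: pmf_embed_pmf)
  interpret interval_bounded_random_variable "measure_pmf M" u a b
    by unfold_locales (auto simp: AE_measure_pmf_iff ab)
  have "measure_pmf.expectation M u = (\<Sum>x\<in>UNIV. pmf M x *\<^sub>R u x)"
    using integral_measure_pmf_real[of UNIV M u] by (simp add: mult.commute)
  hence e0: "measure_pmf.expectation M u = 0" using E0 by (simp add: pM)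
  have "nn_integral (measure_pmf M) (\<lambda>x. exp (l * u x)) \<le> ennreal (exp (l\<^sup>2 * (b - a)\<^sup>2 / 8))"
    by (rule Hoeffdings_lemma_nn_integral_0[OF l e0])
  moreover have "nn_integral (measure_pmf M) (\<lambda>x. exp (l * u x)) = (\<Sum>x\<in>UNIV. ennreal (exp (l * u x)) * pmf M x)"
    by (rule nn_integral_measure_pmf_support) auto
  moreover have "\<dots> = ennreal (\<Sum>x\<in>UNIV. p x * exp (l * u x))"
    using p0 by (simp add: pM sum_ennreal[symmetric] ennreal_mult' mult.commute)
  ultimately show ?thesis
    by (simp add: ennreal_le_iff2)  
qed

abbreviation paths :: "nat \<Rightarrow> (nat \<Rightarrow> 'a) set" where
  "paths m \<equiv> PiE {1..m} (\<lambda>_. UNIV)"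

lemma sum_paths_Suc:
  fixes F :: "(nat \<Rightarrow> 'a::finite) \<Rightarrow> real"
  shows "(\<Sum>x\<in>paths (Suc m). F x) = (\<Sum>x\<in>paths m. \<Sum>v\<in>UNIV. F (x(Suc m := v)))"
proof -
  have e: "{1..Suc m} = insert (Suc m) {1..m}" by auto
  have "(\<Sum>x\<in>paths (Suc m). F x) = (\<Sum>p\<in>UNIV \<times> paths m. F ((\<lambda>(y, g). g(Suc m := y)) p))"
    unfolding e PiE_insert_eq
    by (subst sum.reindex[OF inj_combinator]) (auto simp: o_def)
  also have "\<dots> = (\<Sum>v\<in>UNIV. \<Sum>x\<in>paths m. F (x(Suc m := v)))"
    unfolding sum.cartesian_product by (simp add: case_prod_unfold)
  also have "\<dots> = (\<Sum>x\<in>paths m. \<Sum>v\<in>UNIV. F (x(Suc m := v)))"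
    by (rule sum.swap)
  finally show ?thesis .
qed

lemma paths_upd: "x \<in> paths m \<Longrightarrow> x(Suc m := v) \<in> paths (Suc m)"
  by (auto simp: PiE_def extensional_def)

definition prodP :: "(nat \<Rightarrow> 'a \<Rightarrow> real) \<Rightarrow> nat \<Rightarrow> (nat \<Rightarrow> 'a) \<Rightarrow> real" where
  "prodP Pf m x = (\<Prod>i\<in>{1..m}. Pf i (x i))"

lemma prodP_upd: "prodP Pf (Suc m) (x(Suc m := v)) = prodP Pf m x * Pf (Suc m) v"
proof -
  have e: "{1..Suc m} = insert (Suc m) {1..m}" by auto
  show ?thesis unfolding prodP_def e
    by (subst prod.insert) (auto intro!: prod.cong)
qed

lemma prodP_nonneg: "\<forall>i x. 0 \<le> Pf i x \<Longrightarrow> 0 \<le> prodP Pf m x"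
  unfolding prodP_def by (simp add: prod_nonneg)

lemma prodP_sum:
  fixes Pf :: "nat \<Rightarrow> 'a::finite \<Rightarrow> real"
  assumes "\<forall>i. (\<Sum>x\<in>UNIV. Pf i x) = 1"
  shows "(\<Sum>x\<in>paths m. prodP Pf m x) = 1"
proof (induction m)
  case 0 then show ?case by (simp add: prodP_def)
next
  case (Suc m)
  have "(\<Sum>x\<in>paths (Suc m). prodP Pf (Suc m) x) = (\<Sum>x\<in>paths m. prodP Pf m x * (\<Sum>v\<in>UNIV. Pf (Suc m) v))"
    unfolding sum_paths_Suc prodP_upd by (simp add: sum_distrib_left)
  then show ?case using Suc assms by simp
qed

definition Em :: "(nat \<Rightarrow> 'a::finite \<Rightarrow> real) \<Rightarrow> nat \<Rightarrow> ((nat \<Rightarrow> 'a) \<Rightarrow> real) \<Rightarrow> real" where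
  "Em Pf m g = (\<Sum>x\<in>paths m. prodP Pf m x * g x)"

lemma mgf:
  fixes Pf :: "nat \<Rightarrow> 'a::finite \<Rightarrow> real"
  assumes P0: "\<forall>i x. 0 \<le> Pf i x" and P1: "\<forall>i. (\<Sum>x\<in>UNIV. Pf i x) = 1" and l: "l > 0"
  shows "\<forall>g. (\<forall>x\<in>paths m. \<forall>i\<in>{1..m}. \<forall>v. \<bar>g x - g (x(i:=v))\<bar> \<le> c) \<longrightarrow>
     (\<Sum>x\<in>paths m. prodP Pf m x * exp (l * (g x - Em Pf m g))) \<le> exp (l\<^sup>2 * real m * c\<^sup>2 / 8)"
proof (induction m)
  case 0 then show ?case by (simp add: prodP_def Em_def)
next
  case (Suc m)
  show ?case
  proof (intro allI impI)
    fix g :: "(nat \<Rightarrow> 'a) \<Rightarrow> real"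
    assume bd: "\<forall>x\<in>paths (Suc m). \<forall>i\<in>{1..Suc m}. \<forall>v. \<bar>g x - g (x(i:=v))\<bar> \<le> c"
    define h where "h x = (\<Sum>v\<in>UNIV. Pf (Suc m) v * g (x(Suc m := v)))" for x
    have Eh: "Em Pf (Suc m) g = Em Pf m h"
      unfolding Em_def sum_paths_Suc prodP_upd by (simp add: h_def sum_distrib_left mult.assoc)
    have bdh: "\<forall>x\<in>paths m. \<forall>i\<in>{1..m}. \<forall>w. \<bar>h x - h (x(i:=w))\<bar> \<le> c"
    proof (intro ballI allI)
      fix x :: "nat \<Rightarrow> 'a" and i w assume x: "x \<in> paths m" and i: "i \<in> {1..m}"
      have "\<bar>h x - h (x(i:=w))\<bar> = abs (\<Sum>v\<in>UNIV. Pf (Suc m) v * (g (x(Suc m := v)) - g (x(Suc m := v, i := w))))"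
        using i by (simp add: h_def sum_subtractf[symmetric] right_diff_distrib fun_upd_twist)
      also have "\<dots> \<le> (\<Sum>v\<in>UNIV. \<bar>Pf (Suc m) v * (g (x(Suc m := v)) - g (x(Suc m := v, i := w)))\<bar>)"
        by (rule sum_abs)
      also have "\<dots> \<le> (\<Sum>v\<in>UNIV. Pf (Suc m) v * c)"
      proof (rule sum_mono)
        fix v :: 'a
        have "\<bar>g (x(Suc m := v)) - g (x(Suc m := v, i := w))\<bar> \<le> c"
          using bd paths_upd[OF x] i by auto
        then show "\<bar>Pf (Suc m) v * (g (x(Suc m := v)) - g (x(Suc m := v, i := w)))\<bar> \<le> Pf (Suc m) v * c"
          using P0 by (simp add: abs_mult mult_left_mono)
      qed
      also have "\<dots> = c" using P1 by (simp add: sum_distrib_right[symmetric])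
      finally show "\<bar>h x - h (x(i:=w))\<bar> \<le> c" .
    qed
    have inner: "(\<Sum>v\<in>UNIV. Pf (Suc m) v * exp (l * (g (x(Suc m := v)) - h x))) \<le> exp (l\<^sup>2 * c\<^sup>2 / 8)"
      if x: "x \<in> paths m" for x :: "nat \<Rightarrow> 'a"
    proof -
      define a where "a = Min ((\<lambda>v. g (x(Suc m := v))) ` UNIV) - h x"
      obtain v0 where v0: "Min ((\<lambda>v. g (x(Suc m := v))) ` UNIV) = g (x(Suc m := v0))"
      proof -
        have "Min ((\<lambda>v. g (x(Suc m := v))) ` UNIV) \<in> (\<lambda>v. g (x(Suc m := v))) ` UNIV"
          by (rule Min_in) auto
        then show ?thesis using that by blast
      qed
      have ab: "\<forall>v. a \<le> g (x(Suc m := v)) - h x \<and> g (x(Suc m := v)) - h x \<le> a + c"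
      proof
        fix v
        have "\<bar>g (x(Suc m := v)) - g (x(Suc m := v, Suc m := v0))\<bar> \<le> c"
          using bd[rule_format, OF paths_upd[OF x, of v], of "Suc m" v0] by simp
        then show "a \<le> g (x(Suc m := v)) - h x \<and> g (x(Suc m := v)) - h x \<le> a + c"
          unfolding a_def v0 using Min_le[of "(\<lambda>v. g (x(Suc m := v))) ` UNIV"] v0 by auto
      qed
      have E0: "(\<Sum>v\<in>UNIV. Pf (Suc m) v * (g (x(Suc m := v)) - h x)) = 0"
        using P1 by (simp add: right_diff_distrib sum_subtractf h_def sum_distrib_right[symmetric])
      have "(\<Sum>v\<in>UNIV. Pf (Suc m) v * exp (l * (g (x(Suc m := v)) - h x))) \<le> exp (l\<^sup>2 * (a + c - a)\<^sup>2 / 8)"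
        by (rule hoeff_fin[OF _ _ ab E0 l]) (use P0 P1 in auto)
      then show ?thesis by simp
    qed
    have "(\<Sum>y\<in>paths (Suc m). prodP Pf (Suc m) y * exp (l * (g y - Em Pf (Suc m) g)))
        = (\<Sum>x\<in>paths m. prodP Pf m x * exp (l * (h x - Em Pf m h)) *
              (\<Sum>v\<in>UNIV. Pf (Suc m) v * exp (l * (g (x(Suc m := v)) - h x))))"
      unfolding sum_paths_Suc prodP_upd Eh
      by (auto simp: sum_distrib_left mult_ac exp_add[symmetric] algebra_simps intro!: sum.cong)
    also have "\<dots> \<le> (\<Sum>x\<in>paths m. prodP Pf m x * exp (l * (h x - Em Pf m h)) * exp (l\<^sup>2 * c\<^sup>2 / 8))"
      by (rule sum_mono, rule mult_left_mono[OF inner]) (auto intro!: mult_nonneg_nonneg prodP_nonneg P0)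
    also have "\<dots> = (\<Sum>x\<in>paths m. prodP Pf m x * exp (l * (h x - Em Pf m h))) * exp (l\<^sup>2 * c\<^sup>2 / 8)"
      by (simp add: sum_distrib_right)
    also have "\<dots> \<le> exp (l\<^sup>2 * real m * c\<^sup>2 / 8) * exp (l\<^sup>2 * c\<^sup>2 / 8)"
      using mp[OF spec[OF Suc.IH, of h] bdh] by (intro mult_right_mono) auto
    also have "\<dots> = exp (l\<^sup>2 * real (Suc m) * c\<^sup>2 / 8)"
      by (simp add: exp_add[symmetric] algebra_simps add_divide_distrib)
    finally show "(\<Sum>y\<in>paths (Suc m). prodP Pf (Suc m) y * exp (l * (g y - Em Pf (Suc m) g))) \<le> exp (l\<^sup>2 * real (Suc m) * c\<^sup>2 / 8)" .
  qed
qed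


lemma convex_powr_nonneg:
  assumes p: "p \<ge> 1"
  shows "convex_on {0..} (\<lambda>x::real. x powr p)"
proof (rule convex_onI)
  fix t x y :: real
  assume t: "0 < t" "t < 1" and x: "x \<in> {0..}" and y: "y \<in> {0..}"
  have tp: "t powr p \<le> t" using powr_le_one_le[of t p] t p by auto
  have tp': "(1 - t) powr p \<le> 1 - t" using powr_le_one_le[of "1 - t" p] t p by auto
  show "((1 - t) *\<^sub>R x + t *\<^sub>R y) powr p \<le> (1 - t) * x powr p + t * y powr p"
  proof (cases "x = 0")
    case True
    then have "((1 - t) *\<^sub>R x + t *\<^sub>R y) powr p = t powr p * y powr p"
      by (simp add: powr_mult)
    also have "\<dots> \<le> t * y powr p" using tp by (simp add: mult_right_mono)
    finally show ?thesis using True by simp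
  next
    case False
    show ?thesis
    proof (cases "y = 0")
      case True
      then have "((1 - t) *\<^sub>R x + t *\<^sub>R y) powr p = (1 - t) powr p * x powr p"
        by (simp add: powr_mult)
      also have "\<dots> \<le> (1 - t) * x powr p" using tp' by (simp add: mult_right_mono)
      finally show ?thesis using True by simp
    next
      case False
      have "x \<in> {0<..}" "y \<in> {0<..}" using x y \<open>x \<noteq> 0\<close> False by auto
      then show ?thesis using convex_onD[OF powr_convex[OF p], of t x y] t by auto
    qed
  qed
qed (simp add: convex_real_interval)

lemma jensen_powr:
  fixes a R :: "'b \<Rightarrow> real"
  assumes "finite S" "S \<noteq> {}" "(\<Sum>i\<in>S. a i) = 1" "\<forall>i\<in>S. 0 \<le> a i" "\<forall>i\<in>S. 0 \<le> R i" "p \<ge> 1"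
  shows "(\<Sum>i\<in>S. a i * R i) powr p \<le> (\<Sum>i\<in>S. a i * R i powr p)"
  using convex_on_sum[OF assms(1,2) convex_powr_nonneg[OF assms(6)], of a R] assms by auto

lemma power_mean:
  fixes w R :: "'b \<Rightarrow> real"
  assumes S: "finite S" and w: "\<forall>i\<in>S. 0 \<le> w i" and R: "\<forall>i\<in>S. 0 \<le> R i" and p: "p \<ge> 1"
  shows "(\<Sum>i\<in>S. w i * R i) \<le> (\<Sum>i\<in>S. w i) powr (1 - 1/p) * (\<Sum>i\<in>S. w i * R i powr p) powr (1/p)"
proof (cases "(\<Sum>i\<in>S. w i) = 0")
  case True
  then have "\<forall>i\<in>S. w i = 0" using sum_nonneg_eq_0_iff[OF S] w by blast
  then show ?thesis by simp
next
  case False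
  define W where "W = (\<Sum>i\<in>S. w i)"
  have Wpos: "W > 0" using False w unfolding W_def by (metis less_eq_real_def sum_nonneg)
  have Sne: "S \<noteq> {}" using False by auto
  define a where "a i = w i / W" for i
  have a1: "(\<Sum>i\<in>S. a i) = 1" using Wpos unfolding a_def W_def by (simp add: sum_divide_distrib[symmetric])
  have a0: "\<forall>i\<in>S. 0 \<le> a i" using w Wpos unfolding a_def by auto
  define L where "L = (\<Sum>i\<in>S. a i * R i)"
  have L0: "L \<ge> 0" unfolding L_def using a0 R by (auto intro!: sum_nonneg)
  have J: "L powr p \<le> (\<Sum>i\<in>S. a i * R i powr p)"
    unfolding L_def by (rule jensen_powr[OF S Sne a1 a0 R p])
  have "L = (L powr p) powr (1/p)" using L0 p by (simp add: powr_powr)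
  also have "\<dots> \<le> (\<Sum>i\<in>S. a i * R i powr p) powr (1/p)"
    using J p by (intro powr_mono2) auto
  also have "(\<Sum>i\<in>S. a i * R i powr p) = (\<Sum>i\<in>S. w i * R i powr p) / W"
    unfolding a_def by (simp add: sum_divide_distrib[symmetric])
  finally have "L \<le> ((\<Sum>i\<in>S. w i * R i powr p) / W) powr (1/p)" .
  hence "W * L \<le> W * (((\<Sum>i\<in>S. w i * R i powr p) / W) powr (1/p))"
    using Wpos by simp
  also have "\<dots> = W powr (1 - 1/p) * (\<Sum>i\<in>S. w i * R i powr p) powr (1/p)"
    using Wpos by (simp add: powr_divide powr_diff)
  also have "W * L = (\<Sum>i\<in>S. w i * R i)"
    unfolding L_def a_def using Wpos by (simp add: sum_distrib_left)
  finally show ?thesis unfolding W_def .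
qed


lemma marg_Suc: "i \<ge> 1 \<Longrightarrow> mc_marg P1 K (Suc i) = (\<lambda>y. \<Sum>x\<in>UNIV. mc_marg P1 K i x * K i x y)"
  by (cases i) auto

lemma marg_nonneg:
  assumes "\<forall>x. 0 \<le> P1 x" "\<forall>i x y. 0 \<le> K i x y"
  shows "0 \<le> mc_marg P1 K i x"
  using assms by (induction P1 K i arbitrary: x rule: mc_marg.induct) (auto intro!: sum_nonneg)

lemma marg_sum:
  fixes P1 :: "'a::finite \<Rightarrow> real"
  assumes "(\<Sum>x\<in>UNIV. P1 x) = 1" "\<forall>i x. (\<Sum>y\<in>UNIV. K i x y) = 1"
  shows "(\<Sum>x\<in>UNIV. mc_marg P1 K i x) = 1"
  using assms
proof (induction P1 K i rule: mc_marg.induct)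
  case (3 P1 K i)
  have "(\<Sum>y\<in>UNIV. \<Sum>x\<in>UNIV. mc_marg P1 K (Suc i) x * K (Suc i) x y)
      = (\<Sum>x\<in>UNIV. mc_marg P1 K (Suc i) x * (\<Sum>y\<in>UNIV. K (Suc i) x y))"
    by (subst sum.swap) (simp add: sum_distrib_left)
  then show ?case using 3 by simp
qed auto

lemma joint_Suc: "m \<ge> 1 \<Longrightarrow> mc_joint P1 K (Suc m) x = mc_joint P1 K m x * K m (x m) (x (Suc m))"
proof -
  assume m: "m \<ge> 1"
  have e: "{1..<Suc m} = insert m {1..<m}" using m by auto
  show ?thesis unfolding mc_joint_def e by (simp add: mult_ac)
qed

lemma joint_nonneg:
  assumes "\<forall>x. 0 \<le> P1 x" "\<forall>i x y. 0 \<le> K i x y"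
  shows "0 \<le> mc_joint P1 K m x"
  using assms unfolding mc_joint_def by (auto intro!: mult_nonneg_nonneg prod_nonneg)

lemma joint_le:
  fixes P1 :: "'a::finite \<Rightarrow> real"
  assumes P0: "\<forall>x. 0 \<le> P1 x" and K0: "\<forall>i x y. 0 \<le> K i x y"
  shows "m \<ge> 1 \<Longrightarrow> mc_joint P1 K m x \<le> mc_marg P1 K m (x m)"
proof (induction m)
  case 0 then show ?case by simp
next
  case (Suc m)
  show ?case
  proof (cases "m = 0")
    case True then show ?thesis by (simp add: mc_joint_def)
  next
    case False
    then have m: "m \<ge> 1" by simp
    have "mc_joint P1 K (Suc m) x = mc_joint P1 K m x * K m (x m) (x (Suc m))"
      by (rule joint_Suc[OF m])
    also have "\<dots> \<le> mc_marg P1 K m (x m) * K m (x m) (x (Suc m))"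
      using Suc.IH[OF m] K0 by (intro mult_right_mono) auto
    also have "\<dots> \<le> (\<Sum>z\<in>UNIV. mc_marg P1 K m z * K m z (x (Suc m)))"
      by (rule member_le_sum[where f = "\<lambda>z. mc_marg P1 K m z * K m z (x (Suc m))"])
         (use P0 K0 marg_nonneg[OF P0 K0] in \<open>auto intro!: mult_nonneg_nonneg\<close>)
    also have "\<dots> = mc_marg P1 K (Suc m) (x (Suc m))" by (simp add: marg_Suc[OF m])
    finally show ?thesis .
  qed
qed

definition Rm :: "('a::finite \<Rightarrow> real) \<Rightarrow> (nat \<Rightarrow> 'a \<Rightarrow> 'a \<Rightarrow> real) \<Rightarrow> nat \<Rightarrow> (nat \<Rightarrow> 'a) \<Rightarrow> real" where
  "Rm P1 K m x = (\<Prod>i\<in>{1..<m}. K i (x i) (x (Suc i)) / mc_marg P1 K (Suc i) (x (Suc i)))"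

lemma prodP_Suc: "prodP Pf (Suc m) x = prodP Pf m x * Pf (Suc m) (x (Suc m))"
proof -
  have e: "{1..Suc m} = insert (Suc m) {1..m}" by auto
  show ?thesis unfolding prodP_def e by (simp add: mult_ac)
qed

lemma Rm_Suc: "m \<ge> 1 \<Longrightarrow> Rm P1 K (Suc m) x = Rm P1 K m x * (K m (x m) (x (Suc m)) / mc_marg P1 K (Suc m) (x (Suc m)))"
proof -
  assume m: "m \<ge> 1"
  have e: "{1..<Suc m} = insert m {1..<m}" using m by auto
  show ?thesis unfolding Rm_def e by (simp add: mult_ac)
qed

lemma Rm_upd: "m \<ge> 1 \<Longrightarrow> Rm P1 K (Suc m) (x(Suc m := v)) = Rm P1 K m x * (K m (x m) v / mc_marg P1 K (Suc m) v)"
proof -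
  assume m: "m \<ge> 1"
  have "Rm P1 K m (x(Suc m := v)) = Rm P1 K m x"
    unfolding Rm_def by (intro prod.cong) auto
  then show ?thesis using Rm_Suc[OF m, of P1 K "x(Suc m := v)"] by simp
qed

lemma Rm_nonneg:
  assumes "\<forall>x. 0 \<le> P1 x" "\<forall>i x y. 0 \<le> K i x y"
  shows "0 \<le> Rm P1 K m x"
  unfolding Rm_def using assms by (auto intro!: prod_nonneg divide_nonneg_nonneg marg_nonneg)

lemma joint_fact:
  fixes P1 :: "'a::finite \<Rightarrow> real"
  assumes P0: "\<forall>x. 0 \<le> P1 x" and K0: "\<forall>i x y. 0 \<le> K i x y"
  shows "m \<ge> 1 \<Longrightarrow> mc_joint P1 K m x = prodP (mc_marg P1 K) m x * Rm P1 K m x"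
proof (induction m)
  case 0 then show ?case by simp
next
  case (Suc m)
  show ?case
  proof (cases "m = 0")
    case True then show ?thesis by (simp add: mc_joint_def prodP_def Rm_def)
  next
    case False
    then have m: "m \<ge> 1" by simp
    show ?thesis
    proof (cases "mc_marg P1 K (Suc m) (x (Suc m)) = 0")
      case True
      have "mc_joint P1 K (Suc m) x \<le> 0" using joint_le[OF P0 K0, of "Suc m" x] True by simp
      then have "mc_joint P1 K (Suc m) x = 0" using joint_nonneg[OF P0 K0, of "Suc m" x] by simp
      then show ?thesis using True by (simp add: prodP_Suc)
    next
      case False
      show ?thesis unfolding joint_Suc[OF m] prodP_Suc Rm_Suc[OF m] Suc.IH[OF m]
        using False by (simp add: field_simps)
    qed
  qed
qed

lemma Rm_bound:
  fixes P1 :: "'a::finite \<Rightarrow> real"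
  assumes P0: "\<forall>x. 0 \<le> P1 x" and K0: "\<forall>i x y. 0 \<le> K i x y"
    and P1s: "(\<Sum>x\<in>UNIV. P1 x) = 1" and Ks: "\<forall>i x. (\<Sum>y\<in>UNIV. K i x y) = 1"
    and al: "\<alpha> \<ge> 1"
    and step: "\<forall>i a. i \<ge> 1 \<longrightarrow> 0 < mc_marg P1 K i a \<longrightarrow>
       (\<Sum>v\<in>UNIV. mc_marg P1 K (Suc i) v * (K i a v / mc_marg P1 K (Suc i) v) powr \<alpha>) \<le> c i powr \<alpha>"
  shows "(\<Sum>x\<in>paths m. prodP (mc_marg P1 K) m x * Rm P1 K m x powr \<alpha>) \<le> (\<Prod>i\<in>{1..<m}. c i) powr \<alpha>"
proof (induction m)
  case 0 then show ?case by (simp add: prodP_def Rm_def)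
next
  case (Suc m)
  show ?case
  proof (cases "m = 0")
    case True
    have "(\<Sum>x\<in>paths (Suc m). prodP (mc_marg P1 K) (Suc m) x * Rm P1 K (Suc m) x powr \<alpha>)
       = (\<Sum>v\<in>UNIV. mc_marg P1 K 1 v)"
      unfolding sum_paths_Suc prodP_upd using True by (simp add: prodP_def Rm_def)
    also have "\<dots> = 1" using marg_sum[OF P1s Ks] by blast
    finally show ?thesis using True by simp
  next
    case False
    then have m: "m \<ge> 1" by simp
    have "(\<Sum>x\<in>paths (Suc m). prodP (mc_marg P1 K) (Suc m) x * Rm P1 K (Suc m) x powr \<alpha>)
       = (\<Sum>x\<in>paths m. prodP (mc_marg P1 K) m x * Rm P1 K m x powr \<alpha> *
            (\<Sum>v\<in>UNIV. mc_marg P1 K (Suc m) v * (K m (x m) v / mc_marg P1 K (Suc m) v) powr \<alpha>))"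
      unfolding sum_paths_Suc prodP_upd Rm_upd[OF m] powr_mult
      by (simp add: sum_distrib_left mult_ac)
    also have "\<dots> \<le> (\<Sum>x\<in>paths m. prodP (mc_marg P1 K) m x * Rm P1 K m x powr \<alpha> * c m powr \<alpha>)"
    proof (rule sum_mono)
      fix x :: "nat \<Rightarrow> 'a" assume x: "x \<in> paths m"
      have pn: "0 \<le> prodP (mc_marg P1 K) m x" by (rule prodP_nonneg) (use marg_nonneg[OF P0 K0] in blast)
      show "prodP (mc_marg P1 K) m x * Rm P1 K m x powr \<alpha> *
            (\<Sum>v\<in>UNIV. mc_marg P1 K (Suc m) v * (K m (x m) v / mc_marg P1 K (Suc m) v) powr \<alpha>)
            \<le> prodP (mc_marg P1 K) m x * Rm P1 K m x powr \<alpha> * c m powr \<alpha>"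
      proof (cases "prodP (mc_marg P1 K) m x = 0")
        case True then show ?thesis by simp
      next
        case False
        have "mc_marg P1 K m (x m) \<noteq> 0"
          using False m unfolding prodP_def by (auto simp: prod_zero_iff)
        then have "0 < mc_marg P1 K m (x m)" using marg_nonneg[OF P0 K0, of m "x m"]
          by (simp add: less_le)
        then have "(\<Sum>v\<in>UNIV. mc_marg P1 K (Suc m) v * (K m (x m) v / mc_marg P1 K (Suc m) v) powr \<alpha>) \<le> c m powr \<alpha>"
          using step m by blast
        then show ?thesis using pn by (intro mult_left_mono) auto
      qed
    qed
    also have "\<dots> = (\<Sum>x\<in>paths m. prodP (mc_marg P1 K) m x * Rm P1 K m x powr \<alpha>) * c m powr \<alpha>"
      by (simp add: sum_distrib_right)
    also have "\<dots> \<le> (\<Prod>i\<in>{1..<m}. c i) powr \<alpha> * c m powr \<alpha>"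
      using Suc.IH by (intro mult_right_mono) auto
    also have "\<dots> = (\<Prod>i\<in>{1..<Suc m}. c i) powr \<alpha>"
    proof -
      have e: "{1..<Suc m} = insert m {1..<m}" using m by auto
      show ?thesis unfolding e by (simp add: powr_mult mult_ac)
    qed
    finally show ?thesis .
  qed
qed



lemma Lp_norm_nonneg: "0 \<le> Lp_norm \<mu> p g"
  unfolding Lp_norm_def by simp

lemma kernel_contr:
  fixes P :: "'a::finite \<Rightarrow> real" and K :: "'a \<Rightarrow> 'a \<Rightarrow> real"
  assumes P0: "\<forall>x. 0 \<le> P x" and K0: "\<forall>x y. 0 \<le> K x y" and Ks: "\<forall>x. (\<Sum>y\<in>UNIV. K x y) = 1"
    and Qd: "Q = (\<lambda>y. \<Sum>x\<in>UNIV. P x * K x y)" and al: "\<alpha> \<ge> 1"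
  shows "Lp_norm P \<alpha> (apply_kernel K g) \<le> Lp_norm Q \<alpha> g"
proof -
  have pt: "\<bar>apply_kernel K g x\<bar> powr \<alpha> \<le> (\<Sum>y\<in>UNIV. K x y * \<bar>g y\<bar> powr \<alpha>)" for x
  proof -
    have "\<bar>apply_kernel K g x\<bar> \<le> (\<Sum>y\<in>UNIV. K x y * \<bar>g y\<bar>)"
      unfolding apply_kernel_def
    proof -
      have "\<bar>\<Sum>y\<in>UNIV. K x y * g y\<bar> \<le> (\<Sum>y\<in>UNIV. \<bar>K x y * g y\<bar>)" by (rule sum_abs)
      also have "\<dots> = (\<Sum>y\<in>UNIV. K x y * \<bar>g y\<bar>)" using K0 by (simp add: abs_mult)
      finally show "\<bar>\<Sum>y\<in>UNIV. K x y * g y\<bar> \<le> (\<Sum>y\<in>UNIV. K x y * \<bar>g y\<bar>)" .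
    qed
    then have "\<bar>apply_kernel K g x\<bar> powr \<alpha> \<le> (\<Sum>y\<in>UNIV. K x y * \<bar>g y\<bar>) powr \<alpha>"
      using al by (intro powr_mono2) auto
    also have "\<dots> \<le> (\<Sum>y\<in>UNIV. K x y * \<bar>g y\<bar> powr \<alpha>)"
      by (rule jensen_powr) (use K0 Ks al in auto)
    finally show ?thesis .
  qed
  have "(\<Sum>x\<in>UNIV. P x * \<bar>apply_kernel K g x\<bar> powr \<alpha>) \<le> (\<Sum>x\<in>UNIV. P x * (\<Sum>y\<in>UNIV. K x y * \<bar>g y\<bar> powr \<alpha>))"
    using pt P0 by (intro sum_mono mult_left_mono) auto
  also have "\<dots> = (\<Sum>x\<in>UNIV. \<Sum>y\<in>UNIV. P x * K x y * \<bar>g y\<bar> powr \<alpha>)"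
    by (simp add: sum_distrib_left mult_ac)
  also have "\<dots> = (\<Sum>y\<in>UNIV. \<Sum>x\<in>UNIV. P x * K x y * \<bar>g y\<bar> powr \<alpha>)"
    by (rule sum.swap)
  also have "\<dots> = (\<Sum>y\<in>UNIV. Q y * \<bar>g y\<bar> powr \<alpha>)"
    unfolding Qd by (simp add: sum_distrib_right)
  finally have "(\<Sum>x\<in>UNIV. P x * \<bar>apply_kernel K g x\<bar> powr \<alpha>) \<le> (\<Sum>y\<in>UNIV. Q y * \<bar>g y\<bar> powr \<alpha>)" .
  moreover have "0 \<le> (\<Sum>x\<in>UNIV. P x * \<bar>apply_kernel K g x\<bar> powr \<alpha>)"
    using P0 by (intro sum_nonneg mult_nonneg_nonneg) simp_all
  ultimately show ?thesis unfolding Lp_norm_def using al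
    by (intro powr_mono2) simp_all
qed

lemma ne_emptyI_aux: "x \<in> A \<Longrightarrow> A \<noteq> {}" by auto

lemma hc_ge1:
  fixes P :: "'a::finite \<Rightarrow> real" and K :: "'a \<Rightarrow> 'a \<Rightarrow> real"
  assumes P0: "\<forall>x. 0 \<le> P x" and K0: "\<forall>x y. 0 \<le> K x y" and Ks: "\<forall>x. (\<Sum>y\<in>UNIV. K x y) = 1"
    and Qd: "Q = (\<lambda>y. \<Sum>x\<in>UNIV. P x * K x y)" and al: "\<alpha> \<ge> 1"
  shows "1 \<le> hc_gamma_star P Q K \<alpha>"
proof -
  have on: "op_norm (apply_kernel K) P \<alpha> Q \<alpha> \<le> 1"
    unfolding op_norm_def
  proof (rule cSUP_least)
    have m: "(\<lambda>_::'a. 1::real) \<in> {g. g \<noteq> (\<lambda>_. 0)}" by (simp add: fun_eq_iff)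
    show "{g. g \<noteq> (\<lambda>_::'a. 0::real)} \<noteq> {}"
    proof
      assume e: "{g. g \<noteq> (\<lambda>_::'a. 0::real)} = {}"
      from m show False unfolding e by simp
    qed
  next
    fix g :: "'a \<Rightarrow> real"
    have le: "Lp_norm P \<alpha> (apply_kernel K g) \<le> Lp_norm Q \<alpha> g"
      by (rule kernel_contr[OF P0 K0 Ks Qd al])
    show "Lp_norm P \<alpha> (apply_kernel K g) / Lp_norm Q \<alpha> g \<le> 1"
    proof (cases "Lp_norm Q \<alpha> g = 0")
      case True then show ?thesis by simp
    next
      case False
      then have "Lp_norm Q \<alpha> g > 0" using Lp_norm_nonneg[of Q \<alpha> g] by simp
      then show ?thesis using le by simp
    qed
  qed
  have "\<alpha> \<in> {\<gamma>. 1 \<le> \<gamma> \<and> \<gamma> \<le> \<alpha> \<and> op_norm (apply_kernel K) P \<alpha> Q \<gamma> \<le> 1}"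
    using on al by simp
  then have ne: "{\<gamma>. 1 \<le> \<gamma> \<and> \<gamma> \<le> \<alpha> \<and> op_norm (apply_kernel K) P \<alpha> Q \<gamma> \<le> 1} \<noteq> {}"
    by (rule ne_emptyI_aux)
  show ?thesis unfolding hc_gamma_star_def
    by (rule cInf_greatest[OF ne]) simp
qed


lemma sum_if_delta_mult: "(\<Sum>x\<in>UNIV. f x * (if x = a then c else 0)) = f (a::'a::finite) * (c::real)"
proof -
  have "(\<Sum>x\<in>UNIV. f x * (if x = a then c else 0)) = (\<Sum>x\<in>UNIV. if x = a then f x * c else 0)"
    by (intro sum.cong) auto
  also have "\<dots> = f a * c" by (simp add: sum.delta)
  finally show ?thesis .
qed

lemma bwd_bdd:
  fixes P Q :: "'a::finite \<Rightarrow> real" and K :: "'a \<Rightarrow> 'a \<Rightarrow> real"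
  assumes P0: "\<forall>x. 0 \<le> P x" and K0: "\<forall>x y. 0 \<le> K x y" and Ps: "(\<Sum>x\<in>UNIV. P x) = 1"
    and Ks: "\<forall>x. (\<Sum>y\<in>UNIV. K x y) = 1"
    and Qd: "Q = (\<lambda>y. \<Sum>x\<in>UNIV. P x * K x y)" and al: "\<alpha> \<ge> 1" and ga: "\<gamma> \<ge> 1"
  shows "bdd_above ((\<lambda>g. Lp_norm Q \<alpha> (apply_kernel (backward_kernel P Q K) g) / Lp_norm P \<gamma> g) ` {g. g \<noteq> (\<lambda>_. 0)})"
proof -
  define M where "M = (\<Sum>x\<in>UNIV. if 0 < P x then P x powr (-1/\<gamma>) else 0)"
  have M0: "0 \<le> M" unfolding M_def by (auto intro!: sum_nonneg)
  have Mx: "P x powr (-1/\<gamma>) \<le> M" if "0 < P x" for x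
    unfolding M_def using member_le_sum[of x UNIV "\<lambda>x. if 0 < P x then P x powr (-1/\<gamma>) else 0"] that by auto
  have Q0: "0 \<le> Q y" for y unfolding Qd using P0 K0 by (auto intro!: sum_nonneg)
  have Qs: "(\<Sum>y\<in>UNIV. Q y) = 1"
  proof -
    have "(\<Sum>y\<in>UNIV. Q y) = (\<Sum>y\<in>UNIV. \<Sum>x\<in>UNIV. P x * K x y)" unfolding Qd ..
    also have "\<dots> = (\<Sum>x\<in>UNIV. \<Sum>y\<in>UNIV. P x * K x y)" by (rule sum.swap)
    also have "\<dots> = (\<Sum>x\<in>UNIV. P x)" using Ks by (simp add: sum_distrib_left[symmetric])
    finally show ?thesis using Ps by simp
  qed
  have bound: "Lp_norm Q \<alpha> (apply_kernel (backward_kernel P Q K) g) / Lp_norm P \<gamma> g \<le> M" for g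
  proof (cases "Lp_norm P \<gamma> g = 0")
    case True then show ?thesis using M0 by simp
  next
    case False
    define G where "G = Lp_norm P \<gamma> g"
    define S where "S = (\<Sum>x\<in>UNIV. P x * \<bar>g x\<bar> powr \<gamma>)"
    have S0: "0 \<le> S" using P0 unfolding S_def by (auto intro!: sum_nonneg)
    have GS: "G = S powr (1/\<gamma>)" unfolding G_def S_def Lp_norm_def ..
    have Gpos: "0 < G" using False Lp_norm_nonneg[of P \<gamma> g] unfolding G_def by (simp add: less_le)
    have gx: "\<bar>g x\<bar> \<le> M * G" if px: "0 < P x" for x
    proof -
      have "P x * \<bar>g x\<bar> powr \<gamma> \<le> S" unfolding S_def
        by (rule member_le_sum[where f = "\<lambda>x. P x * \<bar>g x\<bar> powr \<gamma>"]) (use P0 in auto)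
      hence "\<bar>g x\<bar> powr \<gamma> \<le> S / P x" using px by (simp add: le_divide_eq mult.commute)
      hence "(\<bar>g x\<bar> powr \<gamma>) powr (1/\<gamma>) \<le> (S / P x) powr (1/\<gamma>)" using ga by (intro powr_mono2) auto
      moreover have "(\<bar>g x\<bar> powr \<gamma>) powr (1/\<gamma>) = \<bar>g x\<bar>" using ga by (simp add: powr_powr)
      moreover have "(S / P x) powr (1/\<gamma>) = G * P x powr (-1/\<gamma>)"
        by (simp add: GS powr_mult inverse_powr powr_minus divide_inverse)
      ultimately have "\<bar>g x\<bar> \<le> G * P x powr (-1/\<gamma>)" by simp
      also have "\<dots> \<le> G * M" using Mx[OF px] Gpos by (intro mult_left_mono) auto
      finally show ?thesis by (simp add: mult.commute)
    qed
    have By: "\<bar>apply_kernel (backward_kernel P Q K) g y\<bar> \<le> M * G" for y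
    proof -
      have "\<bar>apply_kernel (backward_kernel P Q K) g y\<bar> \<le> (\<Sum>x\<in>UNIV. \<bar>K x y * P x / Q y * g x\<bar>)"
        unfolding apply_kernel_def backward_kernel_def by (rule sum_abs)
      also have "\<dots> \<le> (\<Sum>x\<in>UNIV. K x y * P x / Q y * (M * G))"
      proof (rule sum_mono)
        fix x
        have nn: "0 \<le> K x y * P x / Q y" using K0 P0 Q0 by (auto intro!: divide_nonneg_nonneg mult_nonneg_nonneg)
        show "\<bar>K x y * P x / Q y * g x\<bar> \<le> K x y * P x / Q y * (M * G)"
        proof (cases "P x = 0")
          case True then show ?thesis by simp
        next
          case False
          then have "0 < P x" using P0 by (simp add: less_le)
          then have "\<bar>g x\<bar> \<le> M * G" by (rule gx)
          then have "K x y * P x / Q y * \<bar>g x\<bar> \<le> K x y * P x / Q y * (M * G)"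
            using nn by (rule mult_left_mono)
          moreover have "\<bar>K x y * P x / Q y * g x\<bar> = K x y * P x / Q y * \<bar>g x\<bar>"
            using nn by (simp only: abs_mult abs_of_nonneg)
          ultimately show ?thesis by simp
        qed
      qed
      also have "\<dots> = M * G * ((\<Sum>x\<in>UNIV. P x * K x y) / Q y)"
        by (simp add: sum_distrib_left sum_divide_distrib mult_ac)
      also have "\<dots> = M * G * (Q y / Q y)" by (simp add: Qd)
      also have "\<dots> \<le> M * G"
        using M0 Gpos by (cases "Q y = 0") auto
      finally show ?thesis .
    qed
    have "(\<Sum>y\<in>UNIV. Q y * \<bar>apply_kernel (backward_kernel P Q K) g y\<bar> powr \<alpha>) \<le> (\<Sum>y\<in>UNIV. Q y * (M * G) powr \<alpha>)"
      using By Q0 al by (intro sum_mono mult_left_mono powr_mono2) auto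
    also have "\<dots> = (M * G) powr \<alpha>" using Qs by (simp add: sum_distrib_right[symmetric])
    finally have "Lp_norm Q \<alpha> (apply_kernel (backward_kernel P Q K) g) \<le> ((M * G) powr \<alpha>) powr (1/\<alpha>)"
      unfolding Lp_norm_def using al by (intro powr_mono2) (auto intro!: sum_nonneg mult_nonneg_nonneg Q0)
    also have "\<dots> = M * G" using al M0 Gpos by (simp add: powr_powr)
    finally show ?thesis using Gpos unfolding G_def by (simp add: divide_le_eq)
  qed
  show ?thesis by (rule bdd_aboveI2[where M = M]) (rule bound)
qed


lemma bwd_step:
  fixes P Q :: "'a::finite \<Rightarrow> real" and K :: "'a \<Rightarrow> 'a \<Rightarrow> real"
  assumes P0: "\<forall>x. 0 \<le> P x" and K0: "\<forall>x y. 0 \<le> K x y" and Ps: "(\<Sum>x\<in>UNIV. P x) = 1"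
    and Ks: "\<forall>x. (\<Sum>y\<in>UNIV. K x y) = 1"
    and Qd: "Q = (\<lambda>y. \<Sum>x\<in>UNIV. P x * K x y)" and al: "\<alpha> \<ge> 1" and Pa: "0 < P a"
  shows "0 < bwd_norm_star P Q K \<alpha> \<and>
    (\<Sum>v\<in>UNIV. Q v * (K a v / Q v) powr \<alpha>)
      \<le> (bwd_norm_star P Q K \<alpha> * exp (- 1 / holder_conj (hc_gamma_star P Q K \<alpha>) * min_log_supp P)) powr \<alpha>"
proof -
  define \<gamma> where "\<gamma> = hc_gamma_star P Q K \<alpha>"
  define N where "N = bwd_norm_star P Q K \<alpha>"
  have ga: "1 \<le> \<gamma>" unfolding \<gamma>_def by (rule hc_ge1[OF P0 K0 Ks Qd al])
  define B where "B = apply_kernel (backward_kernel P Q K)"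
  define g where "g = (\<lambda>x. if x = a then 1 / P a else 0)"
  have gne: "g \<in> {g. g \<noteq> (\<lambda>_. 0)}"
  proof -
    have "g a \<noteq> 0" using Pa unfolding g_def by simp
    then show ?thesis by auto
  qed
  have Q0: "0 \<le> Q y" for y unfolding Qd using P0 K0 by (auto intro!: sum_nonneg)
  have Bg: "B g = (\<lambda>y. K a y / Q y)"
  proof
    fix y
    have "B g y = (\<Sum>x\<in>UNIV. (K x y * P x / Q y) * (if x = a then 1 / P a else 0))"
      unfolding B_def apply_kernel_def backward_kernel_def g_def ..
    also have "\<dots> = K a y * P a / Q y * (1 / P a)" by (rule sum_if_delta_mult)
    also have "\<dots> = K a y / Q y" using Pa by simp
    finally show "B g y = K a y / Q y" .
  qed
  define D where "D = exp ((1/\<gamma> - 1) * ln (P a))"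
  have Dg: "Lp_norm P \<gamma> g = D"
  proof -
    have "(\<Sum>x\<in>UNIV. P x * \<bar>g x\<bar> powr \<gamma>) = (\<Sum>x\<in>UNIV. P x * (if x = a then (1 / P a) powr \<gamma> else 0))"
      unfolding g_def using Pa by (intro sum.cong) auto
    also have "\<dots> = P a * (1 / P a) powr \<gamma>" by (rule sum_if_delta_mult)
    also have "\<dots> = exp ((1 - \<gamma>) * ln (P a))"
      using Pa by (simp add: powr_def ln_div exp_diff exp_minus field_simps)
    finally have "Lp_norm P \<gamma> g = exp ((1 - \<gamma>) * ln (P a)) powr (1/\<gamma>)"
      unfolding Lp_norm_def by simp
    also have "\<dots> = D" unfolding D_def using ga by (simp add: exp_powr_real field_simps)
    finally show ?thesis .
  qed
  have Dpos: "0 < D" unfolding D_def by simp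
  have bdd: "bdd_above ((\<lambda>g. Lp_norm Q \<alpha> (B g) / Lp_norm P \<gamma> g) ` {g. g \<noteq> (\<lambda>_. 0)})"
    unfolding B_def by (rule bwd_bdd[OF P0 K0 Ps Ks Qd al ga])
  have ratio: "Lp_norm Q \<alpha> (B g) / Lp_norm P \<gamma> g \<le> N"
    unfolding N_def bwd_norm_star_def op_norm_def \<gamma>_def[symmetric] B_def[symmetric]
    by (rule cSUP_upper[OF gne bdd])
  define T where "T = (\<Sum>v\<in>UNIV. Q v * (K a v / Q v) powr \<alpha>)"
  have LpT: "Lp_norm Q \<alpha> (B g) = T powr (1/\<alpha>)"
  proof -
    have "(\<Sum>v\<in>UNIV. Q v * \<bar>K a v / Q v\<bar> powr \<alpha>) = T"
      unfolding T_def using K0 Q0 by (intro sum.cong) auto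
    then show ?thesis unfolding Lp_norm_def Bg by simp
  qed
  have T0: "0 \<le> T" unfolding T_def using Q0 by (auto intro!: sum_nonneg)
  have Tpos: "0 < T"
  proof -
    obtain v where v: "0 < K a v"
    proof (rule ccontr)
      assume "\<not> thesis"
      then have "\<forall>v. K a v \<le> 0" using that by (meson not_less)
      then have "(\<Sum>y\<in>UNIV. K a y) \<le> 0" by (simp add: sum_nonpos)
      then show False using Ks by simp
    qed
    have "P a * K a v \<le> Q v" unfolding Qd
      by (rule member_le_sum[where f = "\<lambda>x. P x * K x v"]) (use P0 K0 in auto)
    then have Qv: "0 < Q v" using Pa v by (smt (verit) mult_pos_pos)
    have "0 < Q v * (K a v / Q v) powr \<alpha>" using Qv v by simp
    also have "\<dots> \<le> T" unfolding T_def
      by (rule member_le_sum[where f = "\<lambda>v. Q v * (K a v / Q v) powr \<alpha>"]) (use Q0 in auto)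
    finally show ?thesis .
  qed
  have Lpos: "0 < Lp_norm Q \<alpha> (B g)" unfolding LpT using Tpos by simp
  have Npos: "0 < N" using ratio Lpos Dpos Dg by (smt (verit) divide_pos_pos)
  have LND: "Lp_norm Q \<alpha> (B g) \<le> N * D" using ratio Dg Dpos by (simp add: divide_le_eq)
  have hc: "- 1 / holder_conj \<gamma> = 1/\<gamma> - 1"
    using ga by (cases "\<gamma> = 1") (auto simp: holder_conj_def field_simps)
  have ml: "min_log_supp P \<le> ln (P a)"
    unfolding min_log_supp_def using Pa by (intro Min_le) auto
  have "(1/\<gamma> - 1) * ln (P a) \<le> (1/\<gamma> - 1) * min_log_supp P"
    using ml ga by (intro mult_left_mono_neg) (auto simp: field_simps)
  then have DE: "D \<le> exp (- 1 / holder_conj \<gamma> * min_log_supp P)"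
    unfolding D_def hc by simp
  have "T = (Lp_norm Q \<alpha> (B g)) powr \<alpha>" unfolding LpT using T0 al by (simp add: powr_powr)
  also have "\<dots> \<le> (N * D) powr \<alpha>" using LND Lpos al by (intro powr_mono2) auto
  also have "\<dots> \<le> (N * exp (- 1 / holder_conj \<gamma> * min_log_supp P)) powr \<alpha>"
    using DE Npos Dpos al by (intro powr_mono2 mult_left_mono) auto
  finally show ?thesis using Npos unfolding T_def N_def \<gamma>_def by simp
qed


lemma tail_one:
  fixes Pf :: "nat \<Rightarrow> 'a::finite \<Rightarrow> real" and g :: "(nat \<Rightarrow> 'a) \<Rightarrow> real"
  assumes P0: "\<forall>i x. 0 \<le> Pf i x" and P1: "\<forall>i. (\<Sum>x\<in>UNIV. Pf i x) = 1"
    and n: "n > 0" and t: "t > 0"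
    and bd: "\<forall>x\<in>paths n. \<forall>i\<in>{1..n}. \<forall>v. \<bar>g x - g (x(i:=v))\<bar> \<le> 1 / real n"
  shows "(\<Sum>x\<in>{x\<in>paths n. t \<le> g x - Em Pf n g}. prodP Pf n x) \<le> exp (- 2 * real n * t\<^sup>2)"
proof -
  define l where "l = 4 * real n * t"
  have l: "l > 0" unfolding l_def using n t by simp
  define E where "E = Em Pf n g"
  have pn: "0 \<le> prodP Pf n x" for x by (rule prodP_nonneg[OF P0])
  have "(\<Sum>x\<in>{x\<in>paths n. t \<le> g x - E}. prodP Pf n x)
      \<le> (\<Sum>x\<in>{x\<in>paths n. t \<le> g x - E}. prodP Pf n x * exp (l * (g x - E)) * exp (- (l * t)))"
  proof (rule sum_mono)
    fix x assume x: "x \<in> {x\<in>paths n. t \<le> g x - E}"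
    have "0 \<le> l * (g x - E) - l * t" using x l by (simp add: right_diff_distrib[symmetric])
    then have "1 \<le> exp (l * (g x - E) - l * t)" by simp
    then have "prodP Pf n x * 1 \<le> prodP Pf n x * exp (l * (g x - E) - l * t)"
      using pn by (intro mult_left_mono) auto
    then show "prodP Pf n x \<le> prodP Pf n x * exp (l * (g x - E)) * exp (- (l * t))"
      by (simp add: exp_diff exp_minus divide_inverse mult.assoc)
  qed
  also have "\<dots> \<le> (\<Sum>x\<in>paths n. prodP Pf n x * exp (l * (g x - E)) * exp (- (l * t)))"
    by (rule sum_mono2) (auto intro!: mult_nonneg_nonneg pn finite_PiE)
  also have "\<dots> = (\<Sum>x\<in>paths n. prodP Pf n x * exp (l * (g x - E))) * exp (- (l * t))"
    by (simp add: sum_distrib_right)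
  also have "\<dots> \<le> exp (l\<^sup>2 * real n * (1 / real n)\<^sup>2 / 8) * exp (- (l * t))"
    using mgf[OF P0 P1 l, of n "1 / real n"] bd unfolding E_def by (intro mult_right_mono) auto
  also have "\<dots> = exp (- 2 * real n * t\<^sup>2)"
    unfolding l_def exp_add[symmetric] using n by (simp add: field_simps power2_eq_square)
  finally show ?thesis unfolding E_def .
qed

lemma tail_two:
  fixes Pf :: "nat \<Rightarrow> 'a::finite \<Rightarrow> real" and f :: "(nat \<Rightarrow> 'a) \<Rightarrow> real"
  assumes P0: "\<forall>i x. 0 \<le> Pf i x" and P1: "\<forall>i. (\<Sum>x\<in>UNIV. Pf i x) = 1"
    and n: "n > 0" and t: "t > 0"
    and bd: "\<forall>x\<in>paths n. \<forall>i\<in>{1..n}. \<forall>v. \<bar>f x - f (x(i:=v))\<bar> \<le> 1 / real n"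
  shows "(\<Sum>x\<in>{x\<in>paths n. t \<le> \<bar>f x - Em Pf n f\<bar>}. prodP Pf n x) \<le> 2 * exp (- 2 * real n * t\<^sup>2)"
proof -
  have pn: "0 \<le> prodP Pf n x" for x by (rule prodP_nonneg[OF P0])
  define A1 where "A1 = {x\<in>paths n. t \<le> f x - Em Pf n f}"
  define A2 where "A2 = {x\<in>paths n. t \<le> (\<lambda>x. - f x) x - Em Pf n (\<lambda>x. - f x)}"
  have fin: "finite (paths n :: (nat \<Rightarrow> 'a) set)" by (simp add: finite_PiE)
  have Em_neg: "Em Pf n (\<lambda>x. - f x) = - Em Pf n f" unfolding Em_def by (simp add: sum_negf)
  have sub: "{x\<in>paths n. t \<le> \<bar>f x - Em Pf n f\<bar>} \<subseteq> A1 \<union> A2"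
    unfolding A1_def A2_def Em_neg by auto
  have "(\<Sum>x\<in>{x\<in>paths n. t \<le> \<bar>f x - Em Pf n f\<bar>}. prodP Pf n x) \<le> (\<Sum>x\<in>A1 \<union> A2. prodP Pf n x)"
    by (rule sum_mono2) (use sub fin pn in \<open>auto simp: A1_def A2_def\<close>)
  also have "\<dots> \<le> (\<Sum>x\<in>A1. prodP Pf n x) + (\<Sum>x\<in>A2. prodP Pf n x)"
  proof -
    have f1: "finite A1" "finite A2" using fin unfolding A1_def A2_def by auto
    have "0 \<le> (\<Sum>x\<in>A1 \<inter> A2. prodP Pf n x)" using pn by (simp add: sum_nonneg)
    then show ?thesis using sum_Un[OF f1, of "prodP Pf n"] by simp
  qed
  also have "\<dots> \<le> exp (- 2 * real n * t\<^sup>2) + exp (- 2 * real n * t\<^sup>2)"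
  proof (rule add_mono)
    show "(\<Sum>x\<in>A1. prodP Pf n x) \<le> exp (- 2 * real n * t\<^sup>2)"
      unfolding A1_def by (rule tail_one[OF P0 P1 n t bd])
    have bd': "\<forall>x\<in>paths n. \<forall>i\<in>{1..n}. \<forall>v. \<bar>(\<lambda>x. - f x) x - (\<lambda>x. - f x) (x(i:=v))\<bar> \<le> 1 / real n"
      using bd by (simp add: abs_minus_commute)
    show "(\<Sum>x\<in>A2. prodP Pf n x) \<le> exp (- 2 * real n * t\<^sup>2)"
      unfolding A2_def by (rule tail_one[OF P0 P1 n t bd'])
  qed
  finally show ?thesis by simp
qed

theorem theorem2:
  fixes P1 :: "'a::finite \<Rightarrow> real"
    and K :: "nat \<Rightarrow> 'a \<Rightarrow> 'a \<Rightarrow> real"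
    and f :: "(nat \<Rightarrow> 'a) \<Rightarrow> real"
    and n :: nat and \<alpha> t :: real
    and Kh :: "'a \<Rightarrow> 'a \<Rightarrow> real" and \<gamma>K NK :: real
  assumes n2: "n \<ge> 2"
    and P1_nonneg: "\<forall>x. 0 \<le> P1 x" and P1_sum: "(\<Sum>x\<in>UNIV. P1 x) = 1"
    and K_nonneg: "\<forall>i x y. 0 \<le> K i x y"
    and K_stoch: "\<forall>i x. (\<Sum>y\<in>UNIV. K i x y) = 1"
    and bdd: "\<forall>x\<in>PiE {1..n} (\<lambda>_. UNIV). \<forall>i\<in>{1..n}. \<forall>v.
               \<bar>f x - f (x(i := v))\<bar> \<le> 1 / real n"
    and alpha: "\<alpha> > 1" and tpos: "t > 0"
  shows
   "dev_prob P1 K n f t \<le> 2 powr (1 / (\<alpha> / (\<alpha> - 1))) * exp (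
       - 2 * real n * t\<^sup>2 / (\<alpha> / (\<alpha> - 1))
       + (\<Sum>i\<in>{1..<n}.
            ln (bwd_norm_star (mc_marg P1 K i) (mc_marg P1 K (Suc i)) (K i) \<alpha>)
            - 1 / holder_conj (hc_gamma_star (mc_marg P1 K i) (mc_marg P1 K (Suc i)) (K i) \<alpha>)
                * min_log_supp (mc_marg P1 K i)))
    \<and> ((\<forall>i\<ge>1. K i = Kh)
        \<and> (\<forall>i\<in>{1..<n}. hc_gamma_star (mc_marg P1 K i) (mc_marg P1 K (Suc i)) Kh \<alpha> = \<gamma>K
                        \<and> bwd_norm_star (mc_marg P1 K i) (mc_marg P1 K (Suc i)) Kh \<alpha> = NK)
       \<longrightarrow>
         dev_prob P1 K n f t \<le> 2 powr (1 / (\<alpha> / (\<alpha> - 1))) * exp (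
             - 2 * real n * t\<^sup>2 / (\<alpha> / (\<alpha> - 1))
             + real (n - 1) * ln NK
             - 1 / holder_conj \<gamma>K * (\<Sum>i\<in>{1..<n}. min_log_supp (mc_marg P1 K i)))
       \<and> 2 powr (1 / (\<alpha> / (\<alpha> - 1))) * exp (
             - 2 * real n * t\<^sup>2 / (\<alpha> / (\<alpha> - 1))
             + real (n - 1) * ln NK
             - 1 / holder_conj \<gamma>K * (\<Sum>i\<in>{1..<n}. min_log_supp (mc_marg P1 K i)))
         \<le> 2 powr (1 / (\<alpha> / (\<alpha> - 1))) * exp (
             - 2 * real n * t\<^sup>2 / (\<alpha> / (\<alpha> - 1))
             + real (n - 1) * ln NK
             - real (n - 1) / holder_conj \<gamma>K
                 * Min ((\<lambda>i. min_log_supp (mc_marg P1 K i)) ` {1..<n})))"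
proof -
  define Pm where "Pm = mc_marg P1 K"
  have n0: "n > 0" and n1: "n \<ge> 1" using n2 by auto
  have al1: "\<alpha> \<ge> 1" using alpha by simp
  have Pm0: "\<forall>i x. 0 \<le> Pm i x" using marg_nonneg[OF P1_nonneg K_nonneg] unfolding Pm_def by blast
  have Pms: "\<forall>i. (\<Sum>x\<in>UNIV. Pm i x) = 1" using marg_sum[OF P1_sum K_stoch] unfolding Pm_def by blast
  have Qd: "Pm (Suc i) = (\<lambda>y. \<Sum>x\<in>UNIV. Pm i x * K i x y)" if "i \<ge> 1" for i
    unfolding Pm_def by (rule marg_Suc[OF that])
  define c where "c i = bwd_norm_star (Pm i) (Pm (Suc i)) (K i) \<alpha> *
      exp (- 1 / holder_conj (hc_gamma_star (Pm i) (Pm (Suc i)) (K i) \<alpha>) * min_log_supp (Pm i))" for i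
  have step: "0 < bwd_norm_star (Pm i) (Pm (Suc i)) (K i) \<alpha> \<and>
      (\<Sum>v\<in>UNIV. Pm (Suc i) v * (K i a v / Pm (Suc i) v) powr \<alpha>) \<le> c i powr \<alpha>"
    if i: "i \<ge> 1" and a: "0 < Pm i a" for i a
  proof -
    have "\<forall>x. 0 \<le> Pm i x" using Pm0 by blast
    moreover have "\<forall>x y. 0 \<le> K i x y" using K_nonneg by blast
    moreover have "(\<Sum>x\<in>UNIV. Pm i x) = 1" using Pms by blast
    moreover have "\<forall>x. (\<Sum>y\<in>UNIV. K i x y) = 1" using K_stoch by blast
    ultimately show ?thesis unfolding c_def using bwd_step[OF _ _ _ _ Qd[OF i] al1 a] by blast
  qed
  have Npos: "0 < bwd_norm_star (Pm i) (Pm (Suc i)) (K i) \<alpha>" if i: "i \<ge> 1" for i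
  proof -
    obtain a where "0 < Pm i a"
    proof (rule ccontr)
      assume "\<not> thesis"
      then have "\<forall>a. Pm i a \<le> 0" using that by (meson not_less)
      then have "(\<Sum>y\<in>UNIV. Pm i y) \<le> 0" by (simp add: sum_nonpos)
      then show False using Pms by simp
    qed
    then show ?thesis using step[OF i] by blast
  qed
  have cpos: "0 < c i" if "i \<ge> 1" for i unfolding c_def using Npos[OF that] by simp
  define C where "C = (\<Prod>i\<in>{1..<n}. c i)"
  have C0: "0 \<le> C" unfolding C_def using cpos by (intro prod_nonneg) (auto simp: less_imp_le)
  have fin: "finite (paths n :: (nat \<Rightarrow> 'a) set)" by (simp add: finite_PiE)
  define E where "E = {x\<in>paths n. t \<le> \<bar>f x - prod_marg_mean P1 K n f\<bar>}"
  have finE: "finite E" unfolding E_def using fin by simp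
  have mean: "prod_marg_mean P1 K n f = Em Pm n f"
    unfolding prod_marg_mean_def Em_def prodP_def Pm_def ..
  have pn: "0 \<le> prodP Pm n x" for x by (rule prodP_nonneg[OF Pm0])
  have Rn: "0 \<le> Rm P1 K n x" for x by (rule Rm_nonneg[OF P1_nonneg K_nonneg])
  have dev: "dev_prob P1 K n f t = (\<Sum>x\<in>E. prodP Pm n x * Rm P1 K n x)"
    unfolding dev_prob_def E_def Pm_def using joint_fact[OF P1_nonneg K_nonneg n1] by simp
  have pm: "(\<Sum>x\<in>E. prodP Pm n x * Rm P1 K n x) \<le>
      (\<Sum>x\<in>E. prodP Pm n x) powr (1 - 1/\<alpha>) * (\<Sum>x\<in>E. prodP Pm n x * Rm P1 K n x powr \<alpha>) powr (1/\<alpha>)"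
    by (rule power_mean[OF finE]) (use pn Rn al1 in auto)
  have PE: "(\<Sum>x\<in>E. prodP Pm n x) \<le> 2 * exp (- 2 * real n * t\<^sup>2)"
    unfolding E_def mean by (rule tail_two[OF Pm0 Pms n0 tpos bdd])
  have RE: "(\<Sum>x\<in>E. prodP Pm n x * Rm P1 K n x powr \<alpha>) \<le> C powr \<alpha>"
  proof -
    have "(\<Sum>x\<in>E. prodP Pm n x * Rm P1 K n x powr \<alpha>) \<le> (\<Sum>x\<in>paths n. prodP Pm n x * Rm P1 K n x powr \<alpha>)"
      by (rule sum_mono2[OF fin]) (use pn in \<open>auto simp: E_def\<close>)
    also have "\<dots> \<le> C powr \<alpha>" unfolding C_def Pm_def
      by (rule Rm_bound[OF P1_nonneg K_nonneg P1_sum K_stoch al1]) (use step in \<open>auto simp: Pm_def\<close>)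
    finally show ?thesis .
  qed
  have b1: "(\<Sum>x\<in>E. prodP Pm n x) powr (1 - 1/\<alpha>) \<le> 2 powr (1 - 1/\<alpha>) * exp (- 2 * real n * t\<^sup>2 * (1 - 1/\<alpha>))"
  proof -
    have "(\<Sum>x\<in>E. prodP Pm n x) powr (1 - 1/\<alpha>) \<le> (2 * exp (- 2 * real n * t\<^sup>2)) powr (1 - 1/\<alpha>)"
      using PE al1 pn by (intro powr_mono2) (auto intro: sum_nonneg)
    also have "\<dots> = 2 powr (1 - 1/\<alpha>) * exp (- 2 * real n * t\<^sup>2 * (1 - 1/\<alpha>))"
      by (simp add: powr_mult exp_powr_real)
    finally show ?thesis .
  qed
  have b2: "(\<Sum>x\<in>E. prodP Pm n x * Rm P1 K n x powr \<alpha>) powr (1/\<alpha>) \<le> C"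
  proof -
    have "(\<Sum>x\<in>E. prodP Pm n x * Rm P1 K n x powr \<alpha>) powr (1/\<alpha>) \<le> (C powr \<alpha>) powr (1/\<alpha>)"
      using RE al1 pn by (intro powr_mono2) (auto intro!: sum_nonneg mult_nonneg_nonneg)
    also have "\<dots> = C" using C0 al1 by (simp add: powr_powr)
    finally show ?thesis .
  qed
  have Cexp: "C = exp (\<Sum>i\<in>{1..<n}.
            ln (bwd_norm_star (mc_marg P1 K i) (mc_marg P1 K (Suc i)) (K i) \<alpha>)
            - 1 / holder_conj (hc_gamma_star (mc_marg P1 K i) (mc_marg P1 K (Suc i)) (K i) \<alpha>)
                * min_log_supp (mc_marg P1 K i))"
    unfolding C_def exp_sum[OF finite_atLeastLessThan]
  proof (rule prod.cong[OF refl])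
    fix i assume "i \<in> {1..<n}"
    then have i: "i \<ge> 1" by simp
    show "c i = exp (ln (bwd_norm_star (mc_marg P1 K i) (mc_marg P1 K (Suc i)) (K i) \<alpha>)
            - 1 / holder_conj (hc_gamma_star (mc_marg P1 K i) (mc_marg P1 K (Suc i)) (K i) \<alpha>)
                * min_log_supp (mc_marg P1 K i))"
      unfolding c_def Pm_def using Npos[OF i] unfolding Pm_def
      by (simp add: exp_diff exp_minus divide_inverse exp_add[symmetric] minus_divide_left)
  qed
  have b1': "(\<Sum>x\<in>E. prodP Pm n x) powr (1 - 1/\<alpha>) \<ge> 0" by simp
  have main: "dev_prob P1 K n f t \<le> 2 powr (1 / (\<alpha> / (\<alpha> - 1))) * exp (
       - 2 * real n * t\<^sup>2 / (\<alpha> / (\<alpha> - 1))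
       + (\<Sum>i\<in>{1..<n}.
            ln (bwd_norm_star (mc_marg P1 K i) (mc_marg P1 K (Suc i)) (K i) \<alpha>)
            - 1 / holder_conj (hc_gamma_star (mc_marg P1 K i) (mc_marg P1 K (Suc i)) (K i) \<alpha>)
                * min_log_supp (mc_marg P1 K i)))"
  proof -
    have "dev_prob P1 K n f t \<le> 2 powr (1 - 1/\<alpha>) * exp (- 2 * real n * t\<^sup>2 * (1 - 1/\<alpha>)) * C"
      unfolding dev using pm b1 b2 b1' C0
      by (smt (verit) mult_mono powr_ge_zero exp_ge_zero mult_nonneg_nonneg)
    also have "1 - 1/\<alpha> = 1 / (\<alpha> / (\<alpha> - 1))" using alpha by (simp add: field_simps)
    also have "- 2 * real n * t\<^sup>2 * (1 / (\<alpha> / (\<alpha> - 1))) = - 2 * real n * t\<^sup>2 / (\<alpha> / (\<alpha> - 1))" by simp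
    finally have "dev_prob P1 K n f t \<le> 2 powr (1 / (\<alpha> / (\<alpha> - 1))) * exp (- 2 * real n * t\<^sup>2 / (\<alpha> / (\<alpha> - 1))) * C" .
    then show ?thesis unfolding Cexp exp_add mult.assoc .
  qed
  show ?thesis
  proof (intro conjI impI)
    show "dev_prob P1 K n f t \<le> 2 powr (1 / (\<alpha> / (\<alpha> - 1))) * exp (
       - 2 * real n * t\<^sup>2 / (\<alpha> / (\<alpha> - 1))
       + (\<Sum>i\<in>{1..<n}.
            ln (bwd_norm_star (mc_marg P1 K i) (mc_marg P1 K (Suc i)) (K i) \<alpha>)
            - 1 / holder_conj (hc_gamma_star (mc_marg P1 K i) (mc_marg P1 K (Suc i)) (K i) \<alpha>)
                * min_log_supp (mc_marg P1 K i)))" by (rule main)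
  next
    assume H: "(\<forall>i\<ge>1. K i = Kh)
        \<and> (\<forall>i\<in>{1..<n}. hc_gamma_star (mc_marg P1 K i) (mc_marg P1 K (Suc i)) Kh \<alpha> = \<gamma>K
                        \<and> bwd_norm_star (mc_marg P1 K i) (mc_marg P1 K (Suc i)) Kh \<alpha> = NK)"
    have sumeq: "(\<Sum>i\<in>{1..<n}.
            ln (bwd_norm_star (mc_marg P1 K i) (mc_marg P1 K (Suc i)) (K i) \<alpha>)
            - 1 / holder_conj (hc_gamma_star (mc_marg P1 K i) (mc_marg P1 K (Suc i)) (K i) \<alpha>)
                * min_log_supp (mc_marg P1 K i))
        = real (n - 1) * ln NK - 1 / holder_conj \<gamma>K * (\<Sum>i\<in>{1..<n}. min_log_supp (mc_marg P1 K i))"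
    proof -
      have "(\<Sum>i\<in>{1..<n}.
            ln (bwd_norm_star (mc_marg P1 K i) (mc_marg P1 K (Suc i)) (K i) \<alpha>)
            - 1 / holder_conj (hc_gamma_star (mc_marg P1 K i) (mc_marg P1 K (Suc i)) (K i) \<alpha>)
                * min_log_supp (mc_marg P1 K i))
          = (\<Sum>i\<in>{1..<n}. ln NK - 1 / holder_conj \<gamma>K * min_log_supp (mc_marg P1 K i))"
        using H by (intro sum.cong) auto
      also have "\<dots> = real (n - 1) * ln NK - 1 / holder_conj \<gamma>K * (\<Sum>i\<in>{1..<n}. min_log_supp (mc_marg P1 K i))"
        by (simp add: sum_subtractf sum_distrib_left)
      finally show ?thesis .
    qed
    show "dev_prob P1 K n f t \<le> 2 powr (1 / (\<alpha> / (\<alpha> - 1))) * exp (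
             - 2 * real n * t\<^sup>2 / (\<alpha> / (\<alpha> - 1))
             + real (n - 1) * ln NK
             - 1 / holder_conj \<gamma>K * (\<Sum>i\<in>{1..<n}. min_log_supp (mc_marg P1 K i)))"
      using main unfolding sumeq by (simp add: algebra_simps)
    have g1: "1 \<le> \<gamma>K"
    proof -
      have one: "1 \<in> {1..<n}" using n2 by simp
      have K1: "K 1 = Kh" using H by simp
      have "1 \<le> hc_gamma_star (Pm 1) (Pm (Suc 1)) (K 1) \<alpha>"
        by (rule hc_ge1[OF _ _ _ Qd al1]) (use Pm0 K_nonneg K_stoch in auto)
      then have "1 \<le> hc_gamma_star (mc_marg P1 K 1) (mc_marg P1 K (Suc 1)) Kh \<alpha>"
        unfolding Pm_def K1 .
      moreover have e: "hc_gamma_star (mc_marg P1 K 1) (mc_marg P1 K (Suc 1)) Kh \<alpha> = \<gamma>K"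
        using H one by blast
      ultimately show ?thesis by simp
    qed
    have h0: "0 \<le> 1 / holder_conj \<gamma>K" using g1 unfolding holder_conj_def by simp
    have "real (n - 1) * Min ((\<lambda>i. min_log_supp (mc_marg P1 K i)) ` {1..<n})
        = (\<Sum>i\<in>{1..<n}. Min ((\<lambda>i. min_log_supp (mc_marg P1 K i)) ` {1..<n}))" by simp
    also have "\<dots> \<le> (\<Sum>i\<in>{1..<n}. min_log_supp (mc_marg P1 K i))"
      by (intro sum_mono Min_le) auto
    finally have "1 / holder_conj \<gamma>K * (real (n - 1) * Min ((\<lambda>i. min_log_supp (mc_marg P1 K i)) ` {1..<n}))
        \<le> 1 / holder_conj \<gamma>K * (\<Sum>i\<in>{1..<n}. min_log_supp (mc_marg P1 K i))"
      using h0 by (rule mult_left_mono)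
    then have "- 2 * real n * t\<^sup>2 / (\<alpha> / (\<alpha> - 1)) + real (n - 1) * ln NK
             - 1 / holder_conj \<gamma>K * (\<Sum>i\<in>{1..<n}. min_log_supp (mc_marg P1 K i))
         \<le> - 2 * real n * t\<^sup>2 / (\<alpha> / (\<alpha> - 1)) + real (n - 1) * ln NK
             - real (n - 1) / holder_conj \<gamma>K * Min ((\<lambda>i. min_log_supp (mc_marg P1 K i)) ` {1..<n})"
      by simp
    then show "2 powr (1 / (\<alpha> / (\<alpha> - 1))) * exp (
             - 2 * real n * t\<^sup>2 / (\<alpha> / (\<alpha> - 1))
             + real (n - 1) * ln NK
             - 1 / holder_conj \<gamma>K * (\<Sum>i\<in>{1..<n}. min_log_supp (mc_marg P1 K i)))
         \<le> 2 powr (1 / (\<alpha> / (\<alpha> - 1))) * exp (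
             - 2 * real n * t\<^sup>2 / (\<alpha> / (\<alpha> - 1))
             + real (n - 1) * ln NK
             - real (n - 1) / holder_conj \<gamma>K
                 * Min ((\<lambda>i. min_log_supp (mc_marg P1 K i)) ` {1..<n}))"
      by (intro mult_left_mono) auto
  qed
qed

end
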